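(* Let $\phi$ be an LTL formula. Every tableau for $\phi$ constructed according to the rules, including the PRUNE rule, has no infinite branch. Consequently, any construction process of a tableau for $\phi$ terminates in a finished tableau, in which every leaf is ticked or crossed.
   Context: LTL formulas over a countable set $AP$ of atoms are built from atoms $p\in AP$ and the constant $\top$ using $\neg\alpha$, $\alpha\wedge\beta$, $X\alpha$ and $\alpha U\beta$. We write $\bot$ for $\neg\top$. A structure is a triple $(S,R,g)$ where $S$ is a finite set, $R\subseteq S\times S$ is serial (every state has an $R$-successor), and $g:S\to 2^{AP}$. A fullpath is a sequence $\sigma=\langle s_0,s_1,\dots\rangle$ with $(s_i,s_{i+1})\in R$ for all $i$. We write $\sigma_i=s_i$ and $\sigma_{\ge j}=\langle s_j,s_{j+1},\dots\rangle$. Truth is defined as follows: - $\sigma\models p$ iff $p\in g(\sigma_0)$; - $\sigma\models\top$ always; - $\neg$ and $\wedge$ are classical; - $\sigma\models X\alpha$ iff $\sigma_{\ge1}\models\alpha$; - $\sigma\models\alpha U\beta$ iff there is $i\ge0$ with $\sigma_{\ge i}\models\beta$ and $\sigma_{\ge j}\models\alpha$ for all $0\le j<i$. A formula is satisfiable iff it is true on some fullpath of some structure. Tableau. A tableau for $\phi$ is a finite rooted tree. Each node $u$ carries a finite set of formulas $\Gamma_u$ (its label), and the root is labelled $\{\phi\}$. We write $u<v$ when $u$ is a proper ancestor of $v$ and $u\le v$ when it is an ancestor or equal. A formula is elementary if it is an atom, a negated atom, or of the form $X\alpha$ or $\neg X\alpha$. A label is poised if it is nonempty, contains no pair $\alpha,\neg\alpha$,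 and all its formulas are elementary. An $X$-eventuality of a poised label is a member of the form $X(\alpha U\beta)$. Static rules are written "parent label / children", where $\{\chi\}\mathbin{\dot\cup}\Delta$ means $\chi\notin\Delta$: - EMPTY: $\{\}$ / tick. - CONTRADICTION: $\{\alpha,\neg\alpha\}\mathbin{\dot\cup}\Delta$ / cross. - $\neg\top$: $\{\neg\top\}\mathbin{\dot\cup}\Delta$ / cross. - $\top$: $\{\top\}\mathbin{\dot\cup}\Delta$ / $\Delta$. - $\wedge$: $\{\alpha\wedge\beta\}\mathbin{\dot\cup}\Delta$ / $\Delta\cup\{\alpha,\beta\}$. - $U$: $\{\alpha U\beta\}\mathbin{\dot\cup}\Delta$ / two children $\Delta\cup\{\beta\}$ and $\Delta\cup\{\alpha,X(\alpha U\beta)\}$. - $\neg\neg$: $\{\neg\neg\alpha\}\mathbin{\dot\cup}\Delta$ / $\Delta\cup\{\alpha\}$. - $\neg\wedge$: $\{\neg(\alpha\wedge\beta)\}\mathbin{\dot\cup}\Delta$ / two children $\Delta\cup\{\neg\alpha\}$ and $\Delta\cup\{\neg\beta\}$. - $\neg U$: $\{\neg(\alpha U\beta)\}\mathbin{\dot\cup}\Delta$ / two children $\Delta\cup\{\neg\alpha,\neg\beta\}$ and $\Delta\cup\{\neg\beta,X\neg(\alpha U\beta)\}$. Non-static rules apply only to a leaf $v$ with poised label. The first applicable one in the following list is used. - LOOP: if some $u<v$ has poised $\Gamma_u\supseteq\Gamma_v$, and for every $X(\alpha U\beta)\in\Gamma_u$ there is $w$ with $u<w\le v$ and $\beta\in\Gamma_w$,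 then $v$ is ticked. - PRUNE: if $u<v'<v$ all have the same poised label $\Gamma$, and for every $X(\alpha U\beta)\in\Gamma$, whenever some $x$ with $v'<x\le v$ has $\beta\in\Gamma_x$ there is $y$ with $u<y\le v'$ and $\beta\in\Gamma_y$, then $v$ is crossed. - PRUNE$_0$: if $u<v$ share the same poised label $\Gamma$, $\Gamma$ contains at least one $X$-eventuality, and for no $X(\alpha U\beta)\in\Gamma$ is there $x$ with $u<x\le v$ and $\beta\in\Gamma_x$, then $v$ is crossed. - TRANSITION: otherwise $v$ gets one child labelled $\{\alpha: X\alpha\in\Gamma_v\}\cup\{\neg\alpha:\neg X\alpha\in\Gamma_v\}$. A tableau is constructed from the root by repeatedly choosing any leaf that is neither ticked nor crossed and applying an applicable rule. For non-poised labels this means any applicable static rule to any suitable pivot formula. A tableau is finished if every leaf is ticked or crossed, and successful if some leaf is ticked. *)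

theory Defs
  imports Main "HOL-Library.Countable"
begin

datatype 'a ltl =
    Atom 'a
  | Top
  | Neg "'a ltl"
  | And "'a ltl" "'a ltl"
  | Next "'a ltl"
  | Until "'a ltl" "'a ltl"

definition elementary :: "'a ltl \<Rightarrow> bool" where
  "elementary f \<longleftrightarrow> (\<exists>p. f = Atom p) \<or> (\<exists>p. f = Neg (Atom p))
      \<or> (\<exists>a. f = Next a) \<or> (\<exists>a. f = Neg (Next a))"

definition poised :: "'a ltl set \<Rightarrow> bool" where
  "poised G \<longleftrightarrow> G \<noteq> {} \<and> (\<forall>a. \<not> (a \<in> G \<and> Neg a \<in> G)) \<and> (\<forall>f\<in>G. elementary f)"

datatype 'a outcome = Ticked | Crossed | Children "'a ltl set list"

text \<open>Static rules: nondeterministic choice of rule and pivot formula.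
  For a pivot \<chi> in G, the set Delta is G - {\<chi>}.\<close>

inductive static_rule :: "'a ltl set \<Rightarrow> 'a outcome \<Rightarrow> bool" where
  r_empty: "G = {} \<Longrightarrow> static_rule G Ticked"
| r_contr: "a \<in> G \<Longrightarrow> Neg a \<in> G \<Longrightarrow> static_rule G Crossed"
| r_negtop: "Neg Top \<in> G \<Longrightarrow> static_rule G Crossed"
| r_top: "Top \<in> G \<Longrightarrow> static_rule G (Children [G - {Top}])"
| r_and: "And a b \<in> G \<Longrightarrow> static_rule G (Children [(G - {And a b}) \<union> {a, b}])"
| r_until: "Until a b \<in> G \<Longrightarrow>
     static_rule G (Children [(G - {Until a b}) \<union> {b},
                              (G - {Until a b}) \<union> {a, Next (Until a b)}])"
| r_negneg: "Neg (Neg a) \<in> G \<Longrightarrow> static_rule G (Children [(G - {Neg (Neg a)}) \<union> {a}])"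
| r_negand: "Neg (And a b) \<in> G \<Longrightarrow>
     static_rule G (Children [(G - {Neg (And a b)}) \<union> {Neg a},
                              (G - {Neg (And a b)}) \<union> {Neg b}])"
| r_neguntil: "Neg (Until a b) \<in> G \<Longrightarrow>
     static_rule G (Children [(G - {Neg (Until a b)}) \<union> {Neg a, Neg b},
                              (G - {Neg (Until a b)}) \<union> {Neg b, Next (Neg (Until a b))}])"

text \<open>A history h is the list of labels on the path from the root
  (index 0) to the current leaf v (index length h - 1). Ancestor u corresponds to index i,
  and u < w \<le> v corresponds to i < w \<le> length h - 1.\<close>

definition loop_cond :: "'a ltl set list \<Rightarrow> bool" where
  "loop_cond h \<longleftrightarrow> (let n = length h - 1 in
     \<exists>i<n. poised (h ! i) \<and> h ! n \<subseteq> h ! i \<and>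
        (\<forall>a b. Next (Until a b) \<in> h ! i \<longrightarrow> (\<exists>w. i < w \<and> w \<le> n \<and> b \<in> h ! w)))"

definition prune_cond :: "'a ltl set list \<Rightarrow> bool" where
  "prune_cond h \<longleftrightarrow> (let n = length h - 1 in
     \<exists>i j. i < j \<and> j < n \<and> h ! i = h ! n \<and> h ! j = h ! n \<and> poised (h ! n) \<and>
        (\<forall>a b. Next (Until a b) \<in> h ! n \<longrightarrow>
            (\<exists>x. j < x \<and> x \<le> n \<and> b \<in> h ! x) \<longrightarrow> (\<exists>y. i < y \<and> y \<le> j \<and> b \<in> h ! y)))"

definition prune0_cond :: "'a ltl set list \<Rightarrow> bool" where
  "prune0_cond h \<longleftrightarrow> (let n = length h - 1 in
     \<exists>i<n. h ! i = h ! n \<and> poised (h ! n) \<and>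
        (\<exists>a b. Next (Until a b) \<in> h ! n) \<and>
        (\<forall>a b. Next (Until a b) \<in> h ! n \<longrightarrow> \<not> (\<exists>x. i < x \<and> x \<le> n \<and> b \<in> h ! x)))"

definition transition :: "'a ltl set \<Rightarrow> 'a ltl set" where
  "transition G = {a. Next a \<in> G} \<union> {Neg a | a. Neg (Next a) \<in> G}"

definition nonstatic_out :: "'a ltl set list \<Rightarrow> 'a outcome" where
  "nonstatic_out h =
     (if loop_cond h then Ticked
      else if prune_cond h then Crossed
      else if prune0_cond h then Crossed
      else Children [transition (last h)])"

definition rule_out :: "'a ltl set list \<Rightarrow> 'a outcome \<Rightarrow> bool" where
  "rule_out h out \<longleftrightarrow>
     (if poised (last h) then out = nonstatic_out h else static_rule (last h) out)"

datatype status = Unmarked | Tick | Cross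

text \<open>Nodes are addressed by lists of child indices; the root is [].\<close>
type_synonym 'a tab = "nat list \<Rightarrow> ('a ltl set \<times> status) option"

definition init_tab :: "'a ltl \<Rightarrow> 'a tab" where
  "init_tab phi = (\<lambda>w. if w = [] then Some ({phi}, Unmarked) else None)"

definition is_leaf :: "'a tab \<Rightarrow> nat list \<Rightarrow> bool" where
  "is_leaf T v \<longleftrightarrow> T v \<noteq> None \<and> (\<forall>i. T (v @ [i]) = None)"

definition hist :: "'a tab \<Rightarrow> nat list \<Rightarrow> 'a ltl set list" where
  "hist T v = map (\<lambda>k. fst (the (T (take k v)))) [0..<Suc (length v)]"

definition apply_out :: "'a tab \<Rightarrow> nat list \<Rightarrow> 'a ltl set \<Rightarrow> 'a outcome \<Rightarrow> 'a tab" where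
  "apply_out T v G out = (case out of
       Ticked \<Rightarrow> T(v := Some (G, Tick))
     | Crossed \<Rightarrow> T(v := Some (G, Cross))
     | Children cs \<Rightarrow> (\<lambda>w. if (\<exists>i<length cs. w = v @ [i])
                            then Some (cs ! last w, Unmarked) else T w))"

definition tab_step :: "'a tab \<Rightarrow> 'a tab \<Rightarrow> bool" where
  "tab_step T T' \<longleftrightarrow> (\<exists>v G out. T v = Some (G, Unmarked) \<and> is_leaf T v \<and>
       rule_out (hist T v) out \<and> T' = apply_out T v G out)"

definition finished :: "'a tab \<Rightarrow> bool" where
  "finished T \<longleftrightarrow> (\<forall>v G s. T v = Some (G, s) \<and> is_leaf T v \<longrightarrow> s \<noteq> Unmarked)"

definition infinite_branch :: "'a ltl \<Rightarrow> (nat \<Rightarrow> 'a ltl set) \<Rightarrow> bool" where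
  "infinite_branch phi L \<longleftrightarrow> L 0 = {phi} \<and>
     (\<forall>n. \<exists>cs. rule_out (map L [0..<Suc n]) (Children cs) \<and> L (Suc n) \<in> set cs)"

end

theory Submission
  imports Defs
begin


fun sub :: "'a ltl \<Rightarrow> 'a ltl set" where
  "sub (Atom p) = {Atom p}"
| "sub Top = {Top}"
| "sub (Neg a) = insert (Neg a) (sub a)"
| "sub (And a b) = insert (And a b) (sub a \<union> sub b)"
| "sub (Next a) = insert (Next a) (sub a)"
| "sub (Until a b) = insert (Until a b) (sub a \<union> sub b)"

lemma sub_finite: "finite (sub f)" by (induct f) auto
lemma sub_self: "f \<in> sub f" by (cases f) auto
lemma sub_trans: "x \<in> sub f \<Longrightarrow> sub x \<subseteq> sub f" by (induct f) auto

lemma sub_Neg: "Neg a \<in> sub f \<Longrightarrow> a \<in> sub f"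
  using sub_trans[of "Neg a" f] sub_self[of a] by auto
lemma sub_Next: "Next a \<in> sub f \<Longrightarrow> a \<in> sub f"
  using sub_trans[of "Next a" f] sub_self[of a] by auto
lemma sub_And: "And a b \<in> sub f \<Longrightarrow> a \<in> sub f \<and> b \<in> sub f"
  using sub_trans[of "And a b" f] sub_self[of a] sub_self[of b] by auto
lemma sub_Until: "Until a b \<in> sub f \<Longrightarrow> a \<in> sub f \<and> b \<in> sub f"
  using sub_trans[of "Until a b" f] sub_self[of a] sub_self[of b] by auto

definition cl :: "'a ltl \<Rightarrow> 'a ltl set" where
  "cl phi = sub phi \<union> Neg ` sub phi \<union> Next ` sub phi \<union> (\<lambda>f. Next (Neg f)) ` sub phi"

lemma cl_finite: "finite (cl phi)" by (simp add: cl_def sub_finite)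
lemma phi_cl: "phi \<in> cl phi" by (simp add: cl_def sub_self)

lemma cl_Next: "Next a \<in> cl phi \<Longrightarrow> a \<in> cl phi"
  unfolding cl_def by (auto simp: image_iff dest: sub_Neg sub_Next)
lemma cl_NegNext: "Neg (Next a) \<in> cl phi \<Longrightarrow> Neg a \<in> cl phi"
  unfolding cl_def by (auto simp: image_iff dest: sub_Neg sub_Next)
lemma cl_NegNeg: "Neg (Neg a) \<in> cl phi \<Longrightarrow> a \<in> cl phi"
  unfolding cl_def by (auto simp: image_iff dest: sub_Neg sub_Next)
lemma cl_And: "And a b \<in> cl phi \<Longrightarrow> a \<in> cl phi \<and> b \<in> cl phi"
  unfolding cl_def by (auto simp: image_iff dest: sub_And)
lemma cl_Until: "Until a b \<in> cl phi \<Longrightarrow> a \<in> cl phi \<and> b \<in> cl phi \<and> Next (Until a b) \<in> cl phi"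
  unfolding cl_def by (auto simp: image_iff dest: sub_Until)
lemma cl_NegAnd: "Neg (And a b) \<in> cl phi \<Longrightarrow> Neg a \<in> cl phi \<and> Neg b \<in> cl phi"
  unfolding cl_def by (auto simp: image_iff dest: sub_And sub_Neg)
lemma cl_NegUntil: "Neg (Until a b) \<in> cl phi \<Longrightarrow> Neg a \<in> cl phi \<and> Neg b \<in> cl phi \<and> Next (Neg (Until a b)) \<in> cl phi"
  unfolding cl_def by (auto simp: image_iff dest: sub_Until sub_Neg)

lemma transition_cl: "G \<subseteq> cl phi \<Longrightarrow> transition G \<subseteq> cl phi"
  unfolding transition_def
  by (auto dest: cl_Next cl_NegNext)

lemma static_cl: assumes "static_rule G (Children cs)" "G \<subseteq> cl phi" "c \<in> set cs" shows "c \<subseteq> cl phi"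
  using assms(1) proof cases
qed (use assms in \<open>auto dest: cl_NegNeg cl_And cl_Until cl_NegAnd cl_NegUntil\<close>)

fun w :: "'a ltl \<Rightarrow> nat" where
  "w (Atom p) = 1" | "w Top = 1" | "w (And a b) = w a + w b + 1" | "w (Next a) = 1"
| "w (Until a b) = w a + w b + 2"
| "w (Neg (Atom p)) = 1" | "w (Neg Top) = 1" | "w (Neg (Neg a)) = w a + 1"
| "w (Neg (And a b)) = w (Neg a) + w (Neg b) + 1" | "w (Neg (Next a)) = 1"
| "w (Neg (Until a b)) = w (Neg a) + w (Neg b) + 2"

lemma sum_replace:
  assumes "finite G" "x \<in> G" "finite A" "sum w A < w x"
  shows "sum w ((G - {x}) \<union> A) < sum w G"
proof -
  have "sum w ((G - {x}) \<union> A) \<le> sum w (G - {x}) + sum w A"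
    using assms by (simp add: sum_Un_nat)
  moreover have "sum w G = w x + sum w (G - {x})" using assms by (simp add: sum.remove)
  ultimately show ?thesis using assms by simp
qed

lemma sum2: "sum w {a, b} \<le> w a + w b" by (cases "a = b") auto

lemma static_dec: assumes "static_rule G (Children cs)" "finite G" "c \<in> set cs" shows "sum w c < sum w G"
  using assms(1) proof cases
  case r_top
  then show ?thesis using assms sum_replace[of G Top "{}"] by auto
next
  case (r_and a b)
  then show ?thesis using assms sum_replace[of G "And a b" "{a,b}"] sum2[of a b] by auto
next
  case (r_until a b)
  then show ?thesis using assms sum_replace[of G "Until a b" "{b}"] sum_replace[of G "Until a b" "{a, Next (Until a b)}"]
     sum2[of a "Next (Until a b)"] by auto
next
  case (r_negneg a)
  then show ?thesis using assms sum_replace[of G "Neg (Neg a)" "{a}"] by auto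
next
  case (r_negand a b)
  then show ?thesis using assms sum_replace[of G "Neg (And a b)" "{Neg a}"] sum_replace[of G "Neg (And a b)" "{Neg b}"] by auto
next
  case (r_neguntil a b)
  then show ?thesis using assms sum_replace[of G "Neg (Until a b)" "{Neg a, Neg b}"]
     sum_replace[of G "Neg (Until a b)" "{Neg b, Next (Neg (Until a b))}"]
     sum2[of "Neg a" "Neg b"] sum2[of "Neg b" "Next (Neg (Until a b))"] by auto
qed



definition legal :: "'a ltl \<Rightarrow> 'a ltl set list \<Rightarrow> bool" where
  "legal phi xs \<longleftrightarrow> xs \<noteq> [] \<and> xs ! 0 = {phi} \<and>
     (\<forall>k. Suc k < length xs \<longrightarrow> (\<exists>cs. rule_out (take (Suc k) xs) (Children cs) \<and> xs ! Suc k \<in> set cs))"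

lemma rule_out_children:
  "rule_out h (Children cs) \<Longrightarrow>
     (poised (last h) \<and> cs = [transition (last h)] \<and> \<not> prune_cond h) \<or>
     (\<not> poised (last h) \<and> static_rule (last h) (Children cs))"
  by (auto simp: rule_out_def nonstatic_out_def split: if_splits)

lemma last_take: "k < length xs \<Longrightarrow> last (take (Suc k) xs) = xs ! k"
  by (simp add: take_Suc_conv_app_nth)

lemma legal_step:
  assumes "legal phi xs" "Suc k < length xs"
  obtains cs where "rule_out (take (Suc k) xs) (Children cs)" "xs ! Suc k \<in> set cs"
  using assms unfolding legal_def by blast

lemma legal_cl: "legal phi xs \<Longrightarrow> k < length xs \<Longrightarrow> xs ! k \<subseteq> cl phi"
proof (induction k)
  case 0
  then show ?case by (simp add: legal_def phi_cl)
next
  case (Suc k)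
  then obtain cs where cs: "rule_out (take (Suc k) xs) (Children cs)" "xs ! Suc k \<in> set cs"
    using legal_step by blast
  have IH: "xs ! k \<subseteq> cl phi" using Suc by simp
  have lt: "last (take (Suc k) xs) = xs ! k" using Suc by (simp add: last_take)
  from rule_out_children[OF cs(1)] show ?case
  proof
    assume "poised (last (take (Suc k) xs)) \<and> cs = [transition (last (take (Suc k) xs))] \<and> \<not> prune_cond (take (Suc k) xs)"
    then show ?thesis using cs(2) lt transition_cl[OF IH] by auto
  next
    assume "\<not> poised (last (take (Suc k) xs)) \<and> static_rule (last (take (Suc k) xs)) (Children cs)"
    then show ?thesis using cs(2) lt IH static_cl by metis
  qed
qed

lemma prune_take:
  assumes "n < length xs"
  shows "prune_cond (take (Suc n) xs) \<longleftrightarrow> (\<exists>i j. i < j \<and> j < n \<and> xs!i = xs!n \<and> xs!j = xs!n \<and> poised (xs!n) \<and>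
        (\<forall>a b. Next (Until a b) \<in> xs!n \<longrightarrow>
            (\<exists>x. j < x \<and> x \<le> n \<and> b \<in> xs!x) \<longrightarrow> (\<exists>y. i < y \<and> y \<le> j \<and> b \<in> xs!y)))"
proof -
  have l: "length (take (Suc n) xs) = Suc n" using assms by simp
  show ?thesis unfolding prune_cond_def Let_def l using assms by (simp cong: conj_cong)
qed

lemma no_prune:
  assumes "legal phi xs" "Suc n < length xs" "poised (xs ! n)"
  shows "\<not> prune_cond (take (Suc n) xs)"
proof -
  obtain cs where cs: "rule_out (take (Suc n) xs) (Children cs)" using legal_step[OF assms(1,2)] by blast
  have lt: "last (take (Suc n) xs) = xs ! n" using assms by (simp add: last_take)
  show ?thesis using rule_out_children[OF cs] lt assms(3) by auto
qed

lemma poised_count: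
  assumes lg: "legal phi xs"
  shows "card {k. Suc k < length xs \<and> poised (xs!k) \<and> xs!k = \<Gamma>} \<le> 2 ^ card (cl phi) + 1"
proof -
  define P where "P = {k. Suc k < length xs \<and> poised (xs!k) \<and> xs!k = \<Gamma>}"
  have finP: "finite P" unfolding P_def by (rule finite_subset[of _ "{..<length xs}"]) auto
  show ?thesis
  proof (cases "P = {}")
    case True
    then have "card P = 0" by simp
    then show ?thesis unfolding P_def by simp
  next
    case False
    define p0 where "p0 = Min P"
    have p0P: "p0 \<in> P" using finP False p0_def by simp
    have p0min: "\<And>q. q \<in> P \<Longrightarrow> p0 \<le> q" using finP p0_def by simp
    define E where "E q = {b. (\<exists>a. Next (Until a b) \<in> \<Gamma>) \<and> (\<exists>y. p0 < y \<and> y \<le> q \<and> b \<in> xs!y)}" for q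
    have key: "E q \<noteq> E q'" if q: "q \<in> P - {p0}" and q': "q' \<in> P - {p0}" and lt: "q < q'" for q q'
    proof -
      have q'l: "Suc q' < length xs" "poised (xs!q')" "xs!q' = \<Gamma>" using q' unfolding P_def by auto
      have ql: "xs!q = \<Gamma>" using q unfolding P_def by auto
      have p0l: "xs!p0 = \<Gamma>" using p0P unfolding P_def by auto
      have p0q: "p0 < q" using p0min[of q] q by auto
      have np: "\<not> prune_cond (take (Suc q') xs)" using no_prune[OF lg q'l(1,2)] .
      have nex: "\<not> (\<exists>i j. i < j \<and> j < q' \<and> xs!i = xs!q' \<and> xs!j = xs!q' \<and> poised (xs!q') \<and>
        (\<forall>a b. Next (Until a b) \<in> xs!q' \<longrightarrow>
            (\<exists>x. j < x \<and> x \<le> q' \<and> b \<in> xs!x) \<longrightarrow> (\<exists>y. i < y \<and> y \<le> j \<and> b \<in> xs!y)))"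
        using np prune_take[of q' xs] q'l(1) by simp
      have "\<not> (p0 < q \<and> q < q' \<and> xs!p0 = xs!q' \<and> xs!q = xs!q' \<and> poised (xs!q') \<and>
        (\<forall>a b. Next (Until a b) \<in> xs!q' \<longrightarrow>
            (\<exists>x. q < x \<and> x \<le> q' \<and> b \<in> xs!x) \<longrightarrow> (\<exists>y. p0 < y \<and> y \<le> q \<and> b \<in> xs!y)))"
        (is "\<not> ?S")
      proof
        assume S: ?S
        show False using nex by (rule notE) (rule exI[of _ p0], rule exI[of _ q], rule S)
      qed
      then have "\<not> (\<forall>a b. Next (Until a b) \<in> xs!q' \<longrightarrow>
            (\<exists>x. q < x \<and> x \<le> q' \<and> b \<in> xs!x) \<longrightarrow> (\<exists>y. p0 < y \<and> y \<le> q \<and> b \<in> xs!y))"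
        using q'l ql p0l p0q lt by simp
      then obtain a b x where ab: "Next (Until a b) \<in> \<Gamma>" "q < x" "x \<le> q'" "b \<in> xs!x"
          "\<not> (\<exists>y. p0 < y \<and> y \<le> q \<and> b \<in> xs!y)"
        using q'l by auto
      have "p0 < x" using ab p0q by simp
      then have "b \<in> E q'" unfolding E_def using ab by blast
      moreover have "b \<notin> E q" unfolding E_def using ab(5) by blast
      ultimately show ?thesis by auto
    qed
    have inj: "inj_on E (P - {p0})"
    proof (rule inj_onI)
      fix q q' assume "q \<in> P - {p0}" "q' \<in> P - {p0}" "E q = E q'"
      then show "q = q'"
      proof -
        assume a: "q \<in> P - {p0}" "q' \<in> P - {p0}" "E q = E q'"
        show "q = q'"
        proof (rule ccontr)
          assume "q \<noteq> q'"
          then consider "q < q'" | "q' < q" by linarith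
          then show False
          proof cases
            case 1 then show False using key[OF a(1,2)] a(3) by simp
          next
            case 2 then show False using key[OF a(2,1)] a(3) by simp
          qed
        qed
      qed
    qed
    have sub: "E ` (P - {p0}) \<subseteq> Pow (cl phi)"
    proof
      fix e assume "e \<in> E ` (P - {p0})"
      then obtain q where q: "q \<in> P" "e = E q" by auto
      have "Suc q < length xs" using q unfolding P_def by auto
      then have "\<And>y. y \<le> q \<Longrightarrow> xs ! y \<subseteq> cl phi" using legal_cl[OF lg] by auto
      then have y: "\<And>y b. y \<le> q \<Longrightarrow> b \<in> xs ! y \<Longrightarrow> b \<in> cl phi" by blast
      have "E q \<subseteq> cl phi"
      proof
        fix b assume "b \<in> E q"
        then obtain y where "y \<le> q" "b \<in> xs!y" unfolding E_def by blast
        then show "b \<in> cl phi" using y by blast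
      qed
      then show "e \<in> Pow (cl phi)" using q by simp
    qed
    have "card (P - {p0}) \<le> card (Pow (cl phi))"
      using card_inj_on_le[OF inj sub] cl_finite by blast
    also have "\<dots> = 2 ^ card (cl phi)" by (simp add: card_Pow cl_finite)
    finally have "card (P - {p0}) \<le> 2 ^ card (cl phi)" .
    moreover have "card P = Suc (card (P - {p0}))" using card_Suc_Diff1[OF finP p0P] by simp
    ultimately have "card P \<le> 2 ^ card (cl phi) + 1" by simp
    then show ?thesis unfolding P_def .
  qed
qed

definition Pb :: "'a ltl \<Rightarrow> nat" where
  "Pb phi = 2 ^ card (cl phi) * (2 ^ card (cl phi) + 1)"

lemma poised_total:
  assumes lg: "legal phi xs"
  shows "card {k. Suc k < length xs \<and> poised (xs!k)} \<le> Pb phi"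
proof -
  let ?P = "\<lambda>\<Gamma>. {k. Suc k < length xs \<and> poised (xs!k) \<and> xs!k = \<Gamma>}"
  have eq: "{k. Suc k < length xs \<and> poised (xs!k)} = (\<Union>\<Gamma>\<in>Pow (cl phi). ?P \<Gamma>)"
    using legal_cl[OF lg] by auto
  have "card (\<Union>\<Gamma>\<in>Pow (cl phi). ?P \<Gamma>) \<le> (\<Sum>\<Gamma>\<in>Pow (cl phi). card (?P \<Gamma>))"
    using cl_finite by (intro card_UN_le) auto
  also have "\<dots> \<le> card (Pow (cl phi)) * (2 ^ card (cl phi) + 1)"
    using sum_bounded_above[of "Pow (cl phi)" "\<lambda>\<Gamma>. card (?P \<Gamma>)" "2 ^ card (cl phi) + 1"]
      poised_count[OF lg] by auto
  also have "\<dots> = Pb phi" unfolding Pb_def by (simp add: card_Pow cl_finite)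
  finally show ?thesis using eq by simp
qed

definition Mb :: "'a ltl \<Rightarrow> nat" where "Mb phi = sum w (cl phi)"
definition Nb :: "'a ltl \<Rightarrow> nat" where "Nb phi = (Mb phi + 1) * Pb phi + Mb phi + 1"

lemma legal_len:
  assumes lg: "legal phi xs"
  shows "length xs \<le> Nb phi"
proof -
  define c where "c k = card {j. j < k \<and> Suc j < length xs \<and> poised (xs!j)}" for k
  define M where "M = Mb phi"
  define B where "B = Pb phi"
  define F where "F k = (M + 1) * (B - c k) + sum w (xs ! k)" for k
  have mb: "sum w (xs ! k) \<le> M" if "k < length xs" for k
    unfolding M_def Mb_def using legal_cl[OF lg that] cl_finite by (intro sum_mono2) auto
  have cB: "c k \<le> B" for k
  proof -
    have "c k \<le> card {k. Suc k < length xs \<and> poised (xs!k)}"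
      unfolding c_def by (rule card_mono) (rule finite_subset[of _ "{..<length xs}"], auto)+
    then show ?thesis using poised_total[OF lg] B_def by simp
  qed
  have dec: "F (Suc k) < F k" if k: "Suc k < length xs" for k
  proof (cases "poised (xs ! k)")
    case True
    have "{j. j < Suc k \<and> Suc j < length xs \<and> poised (xs!j)} = insert k {j. j < k \<and> Suc j < length xs \<and> poised (xs!j)}"
      using True k by auto
    then have cs: "c (Suc k) = Suc (c k)" unfolding c_def by simp
    have "B - c k = Suc (B - c (Suc k))" using cs cB[of "Suc k"] by simp
    then have "F k = (M+1) * (B - c (Suc k)) + (M + 1) + sum w (xs ! k)" unfolding F_def by simp
    moreover have "sum w (xs ! Suc k) \<le> M" using mb k by simp
    ultimately show ?thesis unfolding F_def by simp
  next
    case False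
    have "{j. j < Suc k \<and> Suc j < length xs \<and> poised (xs!j)} = {j. j < k \<and> Suc j < length xs \<and> poised (xs!j)}"
      using False k less_Suc_eq by auto
    then have cs: "c (Suc k) = c k" unfolding c_def by simp
    obtain cs where r: "rule_out (take (Suc k) xs) (Children cs)" "xs ! Suc k \<in> set cs"
      using legal_step[OF lg k] by blast
    have lt: "last (take (Suc k) xs) = xs ! k" using k by (simp add: last_take)
    have st: "static_rule (xs ! k) (Children cs)" using rule_out_children[OF r(1)] lt False by auto
    have fin: "finite (xs ! k)" using legal_cl[OF lg, of k] k cl_finite finite_subset by auto
    have "sum w (xs ! Suc k) < sum w (xs ! k)" using static_dec[OF st fin r(2)] .
    then show ?thesis unfolding F_def cs by simp
  qed
  have bound: "k + F k \<le> F 0" if "k < length xs" for k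
    using that
  proof (induction k)
    case 0 then show ?case by simp
  next
    case (Suc k)
    then show ?case using dec[of k] by simp
  qed
  have "length xs - 1 < length xs" using lg unfolding legal_def by simp
  from bound[OF this] have "length xs - 1 \<le> F 0" by simp
  moreover have "c 0 = 0" unfolding c_def by simp
  moreover have "F 0 \<le> (M + 1) * B + M" unfolding F_def \<open>c 0 = 0\<close> using mb[of 0] lg legal_def
    by (intro add_mono) auto
  ultimately show ?thesis unfolding Nb_def M_def B_def by simp
qed



lemma legal_snoc:
  assumes "legal phi xs" "rule_out xs (Children cs)" "c \<in> set cs"
  shows "legal phi (xs @ [c])"
  unfolding legal_def
proof (intro conjI allI impI)
  show "xs @ [c] \<noteq> []" by simp
  show "(xs @ [c]) ! 0 = {phi}" using assms(1) unfolding legal_def by (simp add: nth_append)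
  fix k assume k: "Suc k < length (xs @ [c])"
  show "\<exists>cs. rule_out (take (Suc k) (xs @ [c])) (Children cs) \<and> (xs @ [c]) ! Suc k \<in> set cs"
  proof (cases "Suc k < length xs")
    case True
    then show ?thesis using assms(1) unfolding legal_def by (simp add: nth_append)
  next
    case False
    then have "Suc k = length xs" using k by simp
    then show ?thesis using assms(2,3) by (auto simp: nth_append)
  qed
qed

lemma hist_len: "length (hist T v) = Suc (length v)" by (simp add: hist_def)

lemma hist_cong:
  assumes "\<And>k. k \<le> length v \<Longrightarrow> fst (the (T' (take k v))) = fst (the (T (take k v)))"
  shows "hist T' v = hist T v"
  unfolding hist_def using assms by (intro map_cong) auto

lemma hist_snoc: "hist T (v @ [i]) = hist T v @ [fst (the (T (v @ [i])))]"
proof -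
  have "hist T (v @ [i]) = map (\<lambda>k. fst (the (T (take k (v @ [i]))))) ([0..<Suc (length v)] @ [Suc (length v)])"
    unfolding hist_def by simp
  also have "\<dots> = hist T v @ [fst (the (T (v @ [i])))]"
    unfolding hist_def by simp
  finally show ?thesis .
qed

lemma rule_out_len: "rule_out h (Children cs) \<Longrightarrow> 1 \<le> length cs \<and> length cs \<le> 2"
proof -
  assume r: "rule_out h (Children cs)"
  from rule_out_children[OF r] show ?thesis
  proof
    assume "poised (last h) \<and> cs = [transition (last h)] \<and> \<not> prune_cond h"
    then show ?thesis by simp
  next
    assume "\<not> poised (last h) \<and> static_rule (last h) (Children cs)"
    then have "static_rule (last h) (Children cs)" by simp
    then show ?thesis by cases auto
  qed
qed

definition Inv :: "'a ltl \<Rightarrow> 'a tab \<Rightarrow> bool" where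
  "Inv phi T \<longleftrightarrow> (\<forall>v. T v \<noteq> None \<longrightarrow> legal phi (hist T v) \<and> set v \<subseteq> {0,1} \<and>
      (\<forall>k \<le> length v. T (take k v) \<noteq> None))"

definition S :: "'a ltl \<Rightarrow> nat list set" where
  "S phi = {v. set v \<subseteq> {0,1} \<and> length v \<le> Nb phi}"

lemma S_finite: "finite (S phi)"
  unfolding S_def by (rule finite_lists_length_le) simp

definition D :: "'a tab \<Rightarrow> nat list set" where "D T = {v. T v \<noteq> None}"
definition U :: "'a tab \<Rightarrow> nat list set" where "U T = {v. \<exists>G. T v = Some (G, Unmarked)}"

definition mu :: "'a ltl \<Rightarrow> 'a tab \<Rightarrow> nat" where
  "mu phi T = 2 * card (S phi - D T) + card (U T)"

lemma Inv_S: "Inv phi T \<Longrightarrow> D T \<subseteq> S phi"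
proof
  fix v assume I: "Inv phi T" and "v \<in> D T"
  then have "legal phi (hist T v)" "set v \<subseteq> {0,1}" unfolding Inv_def D_def by auto
  then show "v \<in> S phi" using legal_len[of phi "hist T v"] hist_len[of T v] unfolding S_def by auto
qed

lemma U_D: "U T \<subseteq> D T" unfolding U_def D_def by auto

lemma Inv_init: "Inv phi (init_tab phi)"
  unfolding Inv_def by (auto simp: init_tab_def hist_def legal_def)

lemma step_mark:
  assumes I: "Inv phi T" and Tv: "T v = Some (G, Unmarked)" and T': "T' = T(v := Some (G, s))"
    and s: "s \<noteq> Unmarked"
  shows "Inv phi T' \<and> mu phi T' < mu phi T"
proof
  have lab: "fst (the (T' u)) = fst (the (T u))" for u using Tv T' by simp
  have dom: "T' u \<noteq> None \<longleftrightarrow> T u \<noteq> None" for u using Tv T' by simp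
  have hist: "hist T' u = hist T u" for u by (rule hist_cong) (simp add: lab)
  show "Inv phi T'" using I unfolding Inv_def hist dom by simp
  have DD: "D T' = D T" unfolding D_def using dom by simp
  have UU: "U T' = U T - {v}" unfolding U_def using T' s by auto
  have vU: "v \<in> U T" unfolding U_def using Tv by simp
  have fin: "finite (U T)" using Inv_S[OF I] U_D S_finite by (metis finite_subset)
  have "card (U T') < card (U T)" unfolding UU by (rule card_Diff1_less[OF fin vU])
  then show "mu phi T' < mu phi T" unfolding mu_def DD by simp
qed

lemma step_children:
  assumes I: "Inv phi T" and Tv: "T v = Some (G, Unmarked)" and leaf: "is_leaf T v"
    and r: "rule_out (hist T v) (Children cs)"
    and T': "T' = (\<lambda>w. if (\<exists>i<length cs. w = v @ [i]) then Some (cs ! last w, Unmarked) else T w)"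
  shows "Inv phi T' \<and> mu phi T' < mu phi T"
proof -
  define New where "New = (\<lambda>i. v @ [i]) ` {..<length cs}"
  have newI: "(\<exists>i<length cs. w = v @ [i]) \<longleftrightarrow> w \<in> New" for w unfolding New_def by auto
  have T'2: "T' w = (if w \<in> New then Some (cs ! last w, Unmarked) else T w)" for w
    using T' newI by simp
  have newN: "T w = None" if "w \<in> New" for w using that leaf unfolding New_def is_leaf_def by auto
  have old: "T' u = T u" if "T u \<noteq> None" for u using T'2 newN that by auto
  have lc: "1 \<le> length cs" "length cs \<le> 2" using rule_out_len[OF r] by auto
  have vdom: "T v \<noteq> None" using Tv by simp
  have histold: "hist T' u = hist T u" if "T u \<noteq> None" for u
  proof (rule hist_cong)
    fix k assume "k \<le> length u"
    then have "T (take k u) \<noteq> None" using I that unfolding Inv_def by auto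
    then show "fst (the (T' (take k u))) = fst (the (T (take k u)))" using old by simp
  qed
  have Inv': "Inv phi T'"
    unfolding Inv_def
  proof (intro allI impI)
    fix u assume u: "T' u \<noteq> None"
    show "legal phi (hist T' u) \<and> set u \<subseteq> {0,1} \<and> (\<forall>k\<le>length u. T' (take k u) \<noteq> None)"
    proof (cases "u \<in> New")
      case False
      then have Tu: "T u \<noteq> None" using u T'2 by simp
      have "\<forall>k\<le>length u. T' (take k u) \<noteq> None" using I Tu old unfolding Inv_def by auto
      then show ?thesis using I Tu histold[OF Tu] unfolding Inv_def by auto
    next
      case True
      then obtain i where i: "i < length cs" "u = v @ [i]" unfolding New_def by auto
      have hv: "hist T' v = hist T v" using histold vdom by simp
      have "hist T' u = hist T v @ [cs ! i]" using i hist_snoc[of T' v i] hv T'2 True by simp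
      moreover have "legal phi (hist T v)" using I vdom unfolding Inv_def by auto
      ultimately have lg: "legal phi (hist T' u)" using legal_snoc r i by (metis nth_mem)
      have "set v \<subseteq> {0,1}" using I vdom unfolding Inv_def by auto
      then have st: "set u \<subseteq> {0,1}" using i lc by auto
      have pre: "T' (take k u) \<noteq> None" if k: "k \<le> length u" for k
      proof (cases "k \<le> length v")
        case True
        then have "take k u = take k v" using i by simp
        moreover have "T (take k v) \<noteq> None" using I vdom True unfolding Inv_def by auto
        ultimately show ?thesis using old by simp
      next
        case False
        then have "take k u = u" using i k by simp
        then show ?thesis using u by simp
      qed
      show ?thesis using lg st pre by auto
    qed
  qed
  have DD: "D T' = D T \<union> New" unfolding D_def using T'2 by auto
  have disj: "D T \<inter> New = {}" unfolding D_def using newN by auto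
  have NS: "New \<subseteq> S phi" using Inv_S[OF Inv'] DD by auto
  have cardN: "card New = length cs" unfolding New_def by (simp add: card_image inj_on_def)
  have finS: "finite (S phi)" by (rule S_finite)
  have finN: "finite New" unfolding New_def by simp
  have split: "S phi - D T = (S phi - D T') \<union> New" using DD disj NS by auto
  have "card (S phi - D T) = card (S phi - D T') + card New"
    unfolding split using finS finN DD by (intro card_Un_disjoint) auto
  then have c1: "card (S phi - D T) = card (S phi - D T') + length cs" using cardN by simp
  have UU: "U T' \<subseteq> U T \<union> New" unfolding U_def using T'2 by auto
  have finU: "finite (U T)" using Inv_S[OF I] U_D finS by (metis finite_subset)
  have "card (U T') \<le> card (U T \<union> New)" using UU finU finN by (intro card_mono) auto
  also have "\<dots> \<le> card (U T) + card New" by (rule card_Un_le)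
  finally have c2: "card (U T') \<le> card (U T) + length cs" using cardN by simp
  have "mu phi T' < mu phi T" unfolding mu_def using c1 c2 lc by simp
  then show ?thesis using Inv' by simp
qed

lemma step_inv:
  assumes "tab_step T T'" "Inv phi T"
  shows "Inv phi T' \<and> mu phi T' < mu phi T"
proof -
  obtain v G out where v: "T v = Some (G, Unmarked)" "is_leaf T v" "rule_out (hist T v) out"
    "T' = apply_out T v G out"
    using assms(1) unfolding tab_step_def by blast
  show ?thesis
  proof (cases out)
    case Ticked
    then show ?thesis using step_mark[OF assms(2) v(1), of T' Tick] v(4) by (simp add: apply_out_def)
  next
    case Crossed
    then show ?thesis using step_mark[OF assms(2) v(1), of T' Cross] v(4) by (simp add: apply_out_def)
  next
    case (Children cs)
    then show ?thesis using step_children[OF assms(2) v(1) v(2), of cs T'] v(3,4)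
      by (simp add: apply_out_def)
  qed
qed

lemma static_exists:
  assumes "\<not> poised G" shows "\<exists>out. static_rule G out"
proof -
  consider "G = {}" | a where "a \<in> G" "Neg a \<in> G" | f where "f \<in> G" "\<not> elementary f"
    using assms unfolding poised_def by blast
  then show ?thesis
  proof cases
    case 1 then show ?thesis using r_empty by blast
  next
    case 2 then show ?thesis using r_contr by blast
  next
    case 3
    show ?thesis
    proof (cases f)
      case (Neg g)
      then show ?thesis using 3 by (cases g) (auto simp: elementary_def intro: static_rule.intros)
    qed (use 3 in \<open>auto simp: elementary_def intro: static_rule.intros\<close>)
  qed
qed

lemma hist_last: "last (hist T v) = fst (the (T v))"
  unfolding hist_def by simp

theorem mainTheorem3:
  fixes phi :: "('a::countable) ltl"
  shows "(\<nexists>L. infinite_branch phi L)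
       \<and> (\<nexists>f. f 0 = init_tab phi \<and> (\<forall>n. tab_step (f n) (f (Suc n))))
       \<and> (\<forall>T. tab_step\<^sup>*\<^sup>* (init_tab phi) T \<longrightarrow> (\<nexists>T'. tab_step T T') \<longrightarrow> finished T)"
proof (intro conjI)
  show "\<nexists>L. infinite_branch phi L"
  proof
    assume "\<exists>L. infinite_branch phi L"
    then obtain L where L: "infinite_branch phi L" by blast
    define xs where "xs = map L [0..<Suc (Nb phi)]"
    have "legal phi xs"
      unfolding legal_def
    proof (intro conjI allI impI)
      show "xs \<noteq> []" unfolding xs_def by simp
      show "xs ! 0 = {phi}" using L unfolding xs_def infinite_branch_def by (simp del: upt_Suc)
      fix k assume k: "Suc k < length xs"
      obtain cs where "rule_out (map L [0..<Suc k]) (Children cs)" "L (Suc k) \<in> set cs"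
        using L unfolding infinite_branch_def by blast
      moreover have "take (Suc k) xs = map L [0..<Suc k]" using k unfolding xs_def by (simp add: take_map)
      moreover have "xs ! Suc k = L (Suc k)" using k unfolding xs_def by (simp del: upt_Suc)
      ultimately show "\<exists>cs. rule_out (take (Suc k) xs) (Children cs) \<and> xs ! Suc k \<in> set cs" by auto
    qed
    then have "length xs \<le> Nb phi" by (rule legal_len)
    then show False unfolding xs_def by simp
  qed
next
  show "\<nexists>f. f 0 = init_tab phi \<and> (\<forall>n. tab_step (f n) (f (Suc n)))"
  proof
    assume "\<exists>f. f 0 = init_tab phi \<and> (\<forall>n. tab_step (f n) (f (Suc n)))"
    then obtain f where f0: "f 0 = init_tab phi" and fs: "\<And>n. tab_step (f n) (f (Suc n))" by blast
    have "Inv phi (f n) \<and> n + mu phi (f n) \<le> mu phi (f 0)" for n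
    proof (induction n)
      case 0 then show ?case using f0 Inv_init by simp
    next
      case (Suc n)
      then show ?case using step_inv[OF fs[of n]] by fastforce
    qed
    from this[of "Suc (mu phi (f 0))"] show False by simp
  qed
next
  show "\<forall>T. tab_step\<^sup>*\<^sup>* (init_tab phi) T \<longrightarrow> (\<nexists>T'. tab_step T T') \<longrightarrow> finished T"
  proof (intro allI impI)
    fix T :: "'a tab"
    assume ns: "\<nexists>T'. tab_step T T'"
    show "finished T" unfolding finished_def
    proof (intro allI impI)
      fix v G s assume vs: "T v = Some (G, s) \<and> is_leaf T v"
      show "s \<noteq> Unmarked"
      proof
        assume s: "s = Unmarked"
        have lastG: "last (hist T v) = G" using vs by (simp add: hist_last)
        have "\<exists>out. rule_out (hist T v) out"
        proof (cases "poised G")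
          case True
          then show ?thesis unfolding rule_out_def lastG by simp
        next
          case False
          then show ?thesis unfolding rule_out_def lastG using static_exists by simp
        qed
        then obtain out where "rule_out (hist T v) out" by blast
        then have "tab_step T (apply_out T v G out)" unfolding tab_step_def using vs s by blast
        then show False using ns by blast
      qed
    qed
  qed
qed

end
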